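(* Let $N\in\mathbb{N}$, $0\le\mu<L<\infty$, and let $M$ be a method which, for coefficients $\{\alpha_{i,j}\}_{i=1,\dots,N;\,j=0,\dots,i-1}$, generates iterates satisfying $w_k-w_\star=(w_0-w_\star)(1-\frac{\mu}{L}\sum_{i=0}^{k-1}\alpha_{k,i})-\sum_{i=0}^{k-1}\frac{\alpha_{k,i}}{L}\nabla\tilde f(w_i)$, $k=1,\dots,N$, where $\tilde f(x)=f(x)-\frac\mu2\|x-w_\star\|^2$. For any $d\in\mathbb{N}$, $w_0\in\mathbb{R}^d$, $f\in\mathcal{F}_{\mu,L}(\mathbb{R}^d)$, $w_\star\in\arg\min_w f(w)$ and $w_N$ the output of $M$ on $f$ from $w_0$, it holds that $\|w_N-w_\star\|^2\le \mathrm{UB}_{\mu,L}(\{\alpha_{i,j}\})\,\|w_0-w_\star\|^2$, with $\mathrm{UB}_{\mu,L}$ as defined in the context.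
   Context: $\mathcal{F}_{\mu,L}(\mathbb{R}^d)$ denotes the set of proper closed convex functions $f:\mathbb{R}^d\to\mathbb{R}$ such that for all $x,y$: $f(x)\le f(y)+\langle\nabla f(y);x-y\rangle+\frac L2\|x-y\|^2$ and $f(x)\ge f(y)+\langle\nabla f(y);x-y\rangle+\frac\mu2\|x-y\|^2$. Let $e_i$ denote unit vectors; set $\mathbf{w}_0=e_1\in\mathbb{R}^{N+1}$, $\mathbf{g}_i=e_{i+2}\in\mathbb{R}^{N+1}$, $\mathbf{f}_i=e_{i+1}\in\mathbb{R}^N$ ($i=0,\dots,N-1$), and $\mathbf{w}_k=\mathbf{w}_0(1-\frac{\mu}{L}\sum_{i=0}^{k-1}\alpha_{k,i})-\sum_{i=0}^{k-1}\frac{\alpha_{k,i}}{L}\mathbf{g}_i$ for $k=1,\dots,N$. With scalars $\tau$, $\lambda_{i,i+1}$ ($i=0,\dots,N-2$), $\lambda_{\star,i}$ ($i=0,\dots,N-1$), $\lambda_{N-1,\star}$, define the symmetric matrix $S=\tau\mathbf{w}_0\mathbf{w}_0^\top-\mathbf{w}_N\mathbf{w}_N^\top+\frac{\lambda_{N-1,\star}}{2(L-\mu)}\mathbf{g}_{N-1}\mathbf{g}_{N-1}^\top+\sum_{i=0}^{N-1}\frac{\lambda_{\star,i}}{2}\big(-\mathbf{g}_i\mathbf{w}_i^\top-\mathbf{w}_i\mathbf{g}_i^\top+\frac{1}{L-\mu}\mathbf{g}_i\mathbf{g}_i^\top\big)+\sum_{i=0}^{N-2}\frac{\lambda_{i,i+1}}{2}\big(\mathbf{g}_{i+1}(\mathbf{w}_i-\mathbf{w}_{i+1})^\top+(\mathbf{w}_i-\mathbf{w}_{i+1})\mathbf{g}_{i+1}^\top+\frac{1}{L-\mu}(\mathbf{g}_i-\mathbf{g}_{i+1})(\mathbf{g}_i-\mathbf{g}_{i+1})^\top\big)$.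 $\mathrm{UB}_{\mu,L}(\{\alpha_{i,j}\})$ is the optimal value of: minimize $\tau$ over $\tau$ and all $\lambda$'s $\ge0$ subject to $S\succeq0$ and $\sum_{i=0}^{N-2}\lambda_{i,i+1}(\mathbf{f}_{i+1}-\mathbf{f}_i)+\sum_{i=0}^{N-1}\lambda_{\star,i}\mathbf{f}_i-\lambda_{N-1,\star}\mathbf{f}_{N-1}=0$. *)

theory Defs
  imports "HOL-Analysis.Analysis"
begin

definition F_class :: "real \<Rightarrow> real \<Rightarrow> ('a::euclidean_space \<Rightarrow> real) \<Rightarrow> ('a \<Rightarrow> 'a) \<Rightarrow> bool" where
  "F_class \<mu> L f g \<longleftrightarrow>
     convex_on UNIV f \<and>
     (\<forall>x. (f has_derivative (\<lambda>h. g x \<bullet> h)) (at x)) \<and>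
     (\<forall>x y. f x \<le> f y + g y \<bullet> (x - y) + L / 2 * (norm (x - y))\<^sup>2) \<and>
     (\<forall>x y. f x \<ge> f y + g y \<bullet> (x - y) + \<mu> / 2 * (norm (x - y))\<^sup>2)"

text \<open>Vectors of R^m are functions nat => real, only indices < m matter (0-based:
  e_1 is index 0). Matrices are nat => nat => real.\<close>
definition ev :: "nat \<Rightarrow> nat \<Rightarrow> real" where
  "ev i = (\<lambda>j. if j = i then 1 else 0)"

definition wv0 :: "nat \<Rightarrow> real" where "wv0 = ev 0"
definition gv :: "nat \<Rightarrow> nat \<Rightarrow> real" where "gv i = ev (i + 2 - 1)"
definition fv :: "nat \<Rightarrow> nat \<Rightarrow> real" where "fv i = ev (i + 1 - 1)"

definition wv :: "real \<Rightarrow> real \<Rightarrow> (nat \<Rightarrow> nat \<Rightarrow> real) \<Rightarrow> nat \<Rightarrow> nat \<Rightarrow> real" where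
  "wv \<mu> L \<alpha> k = (\<lambda>j. wv0 j * (1 - \<mu> / L * (\<Sum>i<k. \<alpha> k i))
                       - (\<Sum>i<k. \<alpha> k i / L * gv i j))"

definition outer :: "(nat \<Rightarrow> real) \<Rightarrow> (nat \<Rightarrow> real) \<Rightarrow> nat \<Rightarrow> nat \<Rightarrow> real" where
  "outer u v = (\<lambda>i j. u i * v j)"

definition Smat :: "real \<Rightarrow> real \<Rightarrow> (nat \<Rightarrow> nat \<Rightarrow> real) \<Rightarrow> nat \<Rightarrow> real \<Rightarrow>
    (nat \<Rightarrow> real) \<Rightarrow> (nat \<Rightarrow> real) \<Rightarrow> real \<Rightarrow> nat \<Rightarrow> nat \<Rightarrow> real" where
  "Smat \<mu> L \<alpha> N \<tau> lam lamS lamN = (\<lambda>a b.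
      \<tau> * outer wv0 wv0 a b
    - outer (wv \<mu> L \<alpha> N) (wv \<mu> L \<alpha> N) a b
    + lamN / (2 * (L - \<mu>)) * outer (gv (N - 1)) (gv (N - 1)) a b
    + (\<Sum>i<N. lamS i / 2 * ( - outer (gv i) (wv \<mu> L \<alpha> i) a b - outer (wv \<mu> L \<alpha> i) (gv i) a b
                              + 1 / (L - \<mu>) * outer (gv i) (gv i) a b))
    + (\<Sum>i<N - 1. lam i / 2 *
         ( outer (gv (i + 1)) (\<lambda>j. wv \<mu> L \<alpha> i j - wv \<mu> L \<alpha> (i + 1) j) a b
         + outer (\<lambda>j. wv \<mu> L \<alpha> i j - wv \<mu> L \<alpha> (i + 1) j) (gv (i + 1)) a b
         + 1 / (L - \<mu>) * outer (\<lambda>j. gv i j - gv (i + 1) j) (\<lambda>j. gv i j - gv (i + 1) j) a b)))"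

definition psd :: "nat \<Rightarrow> (nat \<Rightarrow> nat \<Rightarrow> real) \<Rightarrow> bool" where
  "psd m S \<longleftrightarrow> (\<forall>x::nat \<Rightarrow> real. 0 \<le> (\<Sum>a<m. \<Sum>b<m. x a * S a b * x b))"

definition UB_feasible :: "real \<Rightarrow> real \<Rightarrow> (nat \<Rightarrow> nat \<Rightarrow> real) \<Rightarrow> nat \<Rightarrow> real \<Rightarrow>
    (nat \<Rightarrow> real) \<Rightarrow> (nat \<Rightarrow> real) \<Rightarrow> real \<Rightarrow> bool" where
  "UB_feasible \<mu> L \<alpha> N \<tau> lam lamS lamN \<longleftrightarrow>
     (\<forall>i<N - 1. 0 \<le> lam i) \<and> (\<forall>i<N. 0 \<le> lamS i) \<and> 0 \<le> lamN \<and>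
     psd (N + 1) (Smat \<mu> L \<alpha> N \<tau> lam lamS lamN) \<and>
     (\<forall>j<N. (\<Sum>i<N - 1. lam i * (fv (i + 1) j - fv i j)) + (\<Sum>i<N. lamS i * fv i j)
              - lamN * fv (N - 1) j = 0)"

text \<open>Optimal value of the SDP (as an extended real; +infinity if infeasible).\<close>
definition UB :: "real \<Rightarrow> real \<Rightarrow> (nat \<Rightarrow> nat \<Rightarrow> real) \<Rightarrow> nat \<Rightarrow> ereal" where
  "UB \<mu> L \<alpha> N = Inf {ereal \<tau> | \<tau> lam lamS lamN. UB_feasible \<mu> L \<alpha> N \<tau> lam lamS lamN}"

end

theory Submission
  imports Defs
begin

lemma interp:
  fixes h :: "'a::real_inner \<Rightarrow> real" and G :: "'a \<Rightarrow> 'a"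
  assumes K: "K > 0"
    and up: "\<forall>x y. h x \<le> h y + G y \<bullet> (x - y) + K / 2 * (norm (x - y))\<^sup>2"
    and lo: "\<forall>x y. h y + G y \<bullet> (x - y) \<le> h x"
  shows "h y + G y \<bullet> (x - y) + 1 / (2 * K) * (norm (G x - G y))\<^sup>2 \<le> h x"
proof -
  define d where "d = G x - G y"
  define z where "z = x - (1/K) *\<^sub>R d"
  have 1: "h y + G y \<bullet> (z - y) \<le> h z" using lo by blast
  have 2: "h z \<le> h x + G x \<bullet> (z - x) + K / 2 * (norm (z - x))\<^sup>2" using up by blast
  have e1: "G y \<bullet> (z - y) = G y \<bullet> (x - y) - (1/K) * (G y \<bullet> d)"
    by (simp add: z_def inner_diff_right algebra_simps)
  have e2: "G x \<bullet> (z - x) = - ((1/K) * (G x \<bullet> d))"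
    by (simp add: z_def inner_diff_right algebra_simps)
  have e3': "(norm (z - x))\<^sup>2 = (1/K)^2 * (norm d)\<^sup>2"
    using K by (simp add: z_def power_mult_distrib power_divide)
  have e3: "(norm (z - x))\<^sup>2 = (1/K)^2 * (d \<bullet> d)"
    unfolding e3' by (simp add: power2_norm_eq_inner)
  have e4: "G x \<bullet> d - G y \<bullet> d = d \<bullet> d" by (simp add: d_def inner_diff_left)
  have e5: "(norm (G x - G y))\<^sup>2 = d \<bullet> d" by (simp add: d_def power2_norm_eq_inner)
  have "K / 2 * ((1/K)^2 * (d \<bullet> d)) = (1/(2*K)) * (d \<bullet> d)" using K
    by (simp add: field_simps power2_eq_square)
  moreover have "(1/K) * (G x \<bullet> d) - (1/K) * (G y \<bullet> d) = (1/K) * (d \<bullet> d)"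
    using e4 by (simp add: diff_divide_distrib[symmetric])
  moreover have "(1/K) * (d \<bullet> d) = 2 * ((1/(2*K)) * (d \<bullet> d))" using K by simp
  ultimately have P3: "(1/K) * (G x \<bullet> d) - (1/K) * (G y \<bullet> d) = 2 * ((1/(2*K)) * (d \<bullet> d))" by simp
  have P1: "h y + G y \<bullet> (x - y) - (1/K) * (G y \<bullet> d) \<le> h z" using 1 e1 by simp
  have P2: "h z \<le> h x - (1/K) * (G x \<bullet> d) + (1/(2*K)) * (d \<bullet> d)"
    using 2 e2 e3 \<open>K / 2 * ((1/K)^2 * (d \<bullet> d)) = (1/(2*K)) * (d \<bullet> d)\<close> by simp
  show ?thesis unfolding e5 using P1 P2 P3 by linarith
qed

lemma shift:
  fixes x y ws :: "'a::real_inner"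
  shows "(f x - \<mu>/2 * (norm (x - ws))\<^sup>2) - (f y - \<mu>/2 * (norm (y - ws))\<^sup>2)
     - (g y - \<mu> *\<^sub>R (y - ws)) \<bullet> (x - y) = f x - f y - g y \<bullet> (x - y) - \<mu>/2 * (norm (x - y))\<^sup>2"
proof -
  define a where "a = x - ws"
  define b where "b = y - ws"
  have xy: "x - y = a - b" by (simp add: a_def b_def)
  have "(norm (x - y))\<^sup>2 = a \<bullet> a + b \<bullet> b - 2 * (a \<bullet> b)"
    unfolding xy power2_norm_eq_inner by (simp add: inner_diff_left inner_diff_right inner_commute)
  moreover have "(\<mu> *\<^sub>R b) \<bullet> (a - b) = \<mu> * (a \<bullet> b) - \<mu> * (b \<bullet> b)"
    by (simp add: inner_diff_right inner_commute[of b a])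
  ultimately show ?thesis unfolding xy a_def[symmetric] b_def[symmetric] power2_norm_eq_inner
    by (simp add: inner_diff_left algebra_simps)
qed


definition Bf :: "nat \<Rightarrow> (nat \<Rightarrow> 'a::real_inner) \<Rightarrow> (nat \<Rightarrow> nat \<Rightarrow> real) \<Rightarrow> real" where
  "Bf m X M = (\<Sum>a<m. \<Sum>b<m. M a b * (X a \<bullet> X b))"

definition Uv :: "nat \<Rightarrow> (nat \<Rightarrow> 'a::real_inner) \<Rightarrow> (nat \<Rightarrow> real) \<Rightarrow> 'a" where
  "Uv m X u = (\<Sum>a<m. u a *\<^sub>R X a)"

lemma Bf_add: "Bf m X (\<lambda>a b. M a b + M' a b) = Bf m X M + Bf m X M'"
  by (simp add: Bf_def algebra_simps sum.distrib)
lemma Bf_diff: "Bf m X (\<lambda>a b. M a b - M' a b) = Bf m X M - Bf m X M'"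
  by (simp add: Bf_def algebra_simps sum_subtractf)
lemma Bf_uminus: "Bf m X (\<lambda>a b. - M a b) = - Bf m X M"
  by (simp add: Bf_def sum_negf)
lemma Bf_scale: "Bf m X (\<lambda>a b. c * M a b) = c * Bf m X M"
  by (simp add: Bf_def sum_distrib_left mult.assoc)
lemma Bf_sum: "Bf m X (\<lambda>a b. \<Sum>i\<in>I. M i a b) = (\<Sum>i\<in>I. Bf m X (M i))"
proof -
  have "Bf m X (\<lambda>a b. \<Sum>i\<in>I. M i a b) = (\<Sum>a<m. \<Sum>b<m. \<Sum>i\<in>I. M i a b * (X a \<bullet> X b))"
    by (simp add: Bf_def sum_distrib_right)
  also have "\<dots> = (\<Sum>a<m. \<Sum>i\<in>I. \<Sum>b<m. M i a b * (X a \<bullet> X b))"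
    by (rule sum.cong[OF refl], rule sum.swap)
  also have "\<dots> = (\<Sum>i\<in>I. \<Sum>a<m. \<Sum>b<m. M i a b * (X a \<bullet> X b))"
    by (rule sum.swap)
  finally show ?thesis by (simp add: Bf_def)
qed
lemma Bf_outer: "Bf m X (outer u v) = Uv m X u \<bullet> Uv m X v"
  unfolding Bf_def Uv_def outer_def inner_sum_left by (simp add: inner_sum_right sum_distrib_left mult_ac)

lemma Uv_diff: "Uv m X (\<lambda>j. p j - q j) = Uv m X p - Uv m X q"
  by (simp add: Uv_def scaleR_diff_left sum_subtractf)

lemma Uv_ev: "Uv m X (ev i) = (if i < m then X i else 0)"
proof -
  have "Uv m X (ev i) = (\<Sum>a<m. if i = a then X a else 0)"
    unfolding Uv_def ev_def by (rule sum.cong) auto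
  then show ?thesis by simp
qed

lemma Uv_wv: "Uv m X (wv \<mu> L \<alpha> k) = (1 - \<mu> / L * (\<Sum>i<k. \<alpha> k i)) *\<^sub>R Uv m X wv0
    - (\<Sum>i<k. (\<alpha> k i / L) *\<^sub>R Uv m X (gv i))"
proof -
  define c where "c = 1 - \<mu> / L * (\<Sum>i<k. \<alpha> k i)"
  have "Uv m X (wv \<mu> L \<alpha> k) = (\<Sum>a<m. (wv0 a * c) *\<^sub>R X a) - (\<Sum>a<m. \<Sum>i<k. (\<alpha> k i / L * gv i a) *\<^sub>R X a)"
    by (simp add: Uv_def wv_def c_def scaleR_diff_left sum_subtractf scaleR_sum_left)
  also have "\<dots> = c *\<^sub>R Uv m X wv0 - (\<Sum>i<k. \<Sum>a<m. (\<alpha> k i / L * gv i a) *\<^sub>R X a)"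
    by (subst sum.swap) (simp add: Uv_def scaleR_sum_right mult.commute)
  also have "\<dots> = c *\<^sub>R Uv m X wv0 - (\<Sum>i<k. (\<alpha> k i / L) *\<^sub>R Uv m X (gv i))"
    by (simp add: Uv_def scaleR_sum_right)
  finally show ?thesis by (simp add: c_def)
qed

lemma psd_Bf:
  fixes X :: "nat \<Rightarrow> 'a::euclidean_space"
  assumes "psd m S" shows "0 \<le> Bf m X S"
proof -
  have "Bf m X S = (\<Sum>a<m. \<Sum>b<m. \<Sum>c\<in>Basis. (X a \<bullet> c) * S a b * (X b \<bullet> c))"
    unfolding Bf_def
    by (subst euclidean_inner) (simp add: sum_distrib_left algebra_simps)
  also have "\<dots> = (\<Sum>a<m. \<Sum>c\<in>Basis. \<Sum>b<m. (X a \<bullet> c) * S a b * (X b \<bullet> c))"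
    by (rule sum.cong[OF refl], rule sum.swap)
  also have "\<dots> = (\<Sum>c\<in>Basis. \<Sum>a<m. \<Sum>b<m. (X a \<bullet> c) * S a b * (X b \<bullet> c))"
    by (rule sum.swap)
  also have "\<dots> \<ge> 0"
  proof (rule sum_nonneg)
    fix c :: 'a
    show "0 \<le> (\<Sum>a<m. \<Sum>b<m. (X a \<bullet> c) * S a b * (X b \<bullet> c))"
      using assms[unfolded psd_def, rule_format, of "\<lambda>a. X a \<bullet> c"] by simp
  qed
  finally show ?thesis .
qed


lemma grad_zero:
  fixes f :: "'a::euclidean_space \<Rightarrow> real"
  assumes "\<mu> < L" "0 \<le> \<mu>" "F_class \<mu> L f g" "\<forall>v. f ws \<le> f v"
  shows "g ws = 0"
proof -
  have L: "L > 0" using assms by linarith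
  define x where "x = ws - (1/L) *\<^sub>R g ws"
  have "f x \<le> f ws + g ws \<bullet> (x - ws) + L / 2 * (norm (x - ws))\<^sup>2"
    using assms(3) unfolding F_class_def by blast
  moreover have "g ws \<bullet> (x - ws) = - (1/L) * (g ws \<bullet> g ws)" by (simp add: x_def)
  moreover have "(norm (x - ws))\<^sup>2 = (1/L)^2 * (g ws \<bullet> g ws)"
    by (simp add: x_def power_mult_distrib power2_norm_eq_inner[symmetric] power_divide)
  moreover have "L / 2 * ((1/L)^2 * (g ws \<bullet> g ws)) = (1/(2*L)) * (g ws \<bullet> g ws)"
    using L by (simp add: field_simps power2_eq_square)
  moreover have "f ws \<le> f x" using assms by blast
  ultimately have "(1/(2*L)) * (g ws \<bullet> g ws) \<le> 0" by (simp add: field_simps)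
  then have "g ws \<bullet> g ws \<le> 0" using L by (simp add: divide_le_0_iff)
  then show ?thesis using inner_ge_zero[of "g ws"] inner_eq_zero_iff[of "g ws"] by linarith
qed


lemma bound:
  fixes N :: nat and \<mu> L :: real and \<alpha> :: "nat \<Rightarrow> nat \<Rightarrow> real"
    and f :: "'a::euclidean_space \<Rightarrow> real" and g :: "'a \<Rightarrow> 'a"
    and w :: "nat \<Rightarrow> 'a" and ws :: 'a
  assumes mu: "0 \<le> \<mu>" and mL: "\<mu> < L"
    and F: "F_class \<mu> L f g"
    and mn: "\<forall>v. f ws \<le> f v"
    and it: "\<forall>k\<in>{1..N}. w k - ws =
           (1 - \<mu> / L * (\<Sum>i<k. \<alpha> k i)) *\<^sub>R (w 0 - ws)
           - (\<Sum>i<k. (\<alpha> k i / L) *\<^sub>R (g (w i) - \<mu> *\<^sub>R (w i - ws)))"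
    and feas: "UB_feasible \<mu> L \<alpha> N \<tau> lam lamS lamN"
  shows "(norm (w N - ws))\<^sup>2 \<le> \<tau> * (norm (w 0 - ws))\<^sup>2"
proof -
  define K where "K = L - \<mu>"
  have K: "K > 0" using mL by (simp add: K_def)
  define gt where "gt x = g x - \<mu> *\<^sub>R (x - ws)" for x
  define ft where "ft x = f x - \<mu>/2 * (norm (x - ws))\<^sup>2" for x
  define X where "X a = (if a = 0 then w 0 - ws else gt (w (a - 1)))" for a
  define U where "U = Uv (N+1) X"
  have g0: "g ws = 0" by (rule grad_zero) (use assms in auto)
  have gtws: "gt ws = 0" by (simp add: gt_def g0)
  have up: "\<forall>x y. ft x \<le> ft y + gt y \<bullet> (x - y) + K / 2 * (norm (x - y))\<^sup>2"
  proof (intro allI)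
    fix x y
    have "f x \<le> f y + g y \<bullet> (x - y) + L / 2 * (norm (x - y))\<^sup>2"
      using F unfolding F_class_def by blast
    moreover have "ft x - ft y - gt y \<bullet> (x - y) = f x - f y - g y \<bullet> (x - y) - \<mu>/2 * (norm (x - y))\<^sup>2"
      unfolding ft_def gt_def by (rule shift)
    moreover have "K / 2 * (norm (x - y))\<^sup>2 = L / 2 * (norm (x - y))\<^sup>2 - \<mu> / 2 * (norm (x - y))\<^sup>2"
      by (simp add: K_def field_simps)
    ultimately show "ft x \<le> ft y + gt y \<bullet> (x - y) + K / 2 * (norm (x - y))\<^sup>2" by linarith
  qed
  have lo: "\<forall>x y. ft y + gt y \<bullet> (x - y) \<le> ft x"
  proof (intro allI)
    fix x y
    have "f x \<ge> f y + g y \<bullet> (x - y) + \<mu> / 2 * (norm (x - y))\<^sup>2"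
      using F unfolding F_class_def by blast
    moreover have "ft x - ft y - gt y \<bullet> (x - y) = f x - f y - g y \<bullet> (x - y) - \<mu>/2 * (norm (x - y))\<^sup>2"
      unfolding ft_def gt_def by (rule shift)
    ultimately show "ft y + gt y \<bullet> (x - y) \<le> ft x" by linarith
  qed
  have I: "\<And>x y. ft y + gt y \<bullet> (x - y) + 1 / (2 * K) * (norm (gt x - gt y))\<^sup>2 \<le> ft x"
    using interp[OF K up lo] .
  have Ug: "\<And>i. i < N \<Longrightarrow> U (gv i) = gt (w i)" by (simp add: U_def gv_def Uv_ev X_def)
  have Uw0: "U wv0 = w 0 - ws" by (simp add: U_def wv0_def Uv_ev X_def)
  have Uw: "U (wv \<mu> L \<alpha> k) = w k - ws" if "k \<le> N" for k
  proof (cases "k = 0")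
    case True
    have "wv \<mu> L \<alpha> 0 = wv0" by (rule ext) (simp add: wv_def)
    then show ?thesis using True Uw0 by simp
  next
    case False
    have "U (wv \<mu> L \<alpha> k) = (1 - \<mu> / L * (\<Sum>i<k. \<alpha> k i)) *\<^sub>R U wv0
           - (\<Sum>i<k. (\<alpha> k i / L) *\<^sub>R U (gv i))"
      by (simp add: U_def Uv_wv)
    also have "(\<Sum>i<k. (\<alpha> k i / L) *\<^sub>R U (gv i)) = (\<Sum>i<k. (\<alpha> k i / L) *\<^sub>R (g (w i) - \<mu> *\<^sub>R (w i - ws)))"
      by (rule sum.cong) (use that in \<open>auto simp: Ug gt_def\<close>)
    also have "k \<in> {1..N}" using that False by simp
    then have "w k - ws = (1 - \<mu> / L * (\<Sum>i<k. \<alpha> k i)) *\<^sub>R (w 0 - ws)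
           - (\<Sum>i<k. (\<alpha> k i / L) *\<^sub>R (g (w i) - \<mu> *\<^sub>R (w i - ws)))"
      using it by blast
    then have "(1 - \<mu> / L * (\<Sum>i<k. \<alpha> k i)) *\<^sub>R U wv0
           - (\<Sum>i<k. (\<alpha> k i / L) *\<^sub>R (g (w i) - \<mu> *\<^sub>R (w i - ws))) = w k - ws"
      by (simp add: Uw0)
    finally show ?thesis .
  qed
  from feas have lam0: "\<forall>i<N - 1. 0 \<le> lam i" and lamS0: "\<forall>i<N. 0 \<le> lamS i" and lamN0: "0 \<le> lamN"
    and psdS: "psd (N + 1) (Smat \<mu> L \<alpha> N \<tau> lam lamS lamN)"
    and lin: "\<forall>j<N. (\<Sum>i<N - 1. lam i * (fv (i + 1) j - fv i j)) + (\<Sum>i<N. lamS i * fv i j)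
              - lamN * fv (N - 1) j = 0"
    unfolding UB_feasible_def by auto
  have "0 \<le> Bf (N+1) X (Smat \<mu> L \<alpha> N \<tau> lam lamS lamN)" by (rule psd_Bf[OF psdS])
  also have "Bf (N+1) X (Smat \<mu> L \<alpha> N \<tau> lam lamS lamN) =
     \<tau> * (U wv0 \<bullet> U wv0) - U (wv \<mu> L \<alpha> N) \<bullet> U (wv \<mu> L \<alpha> N)
     + lamN / (2 * (L - \<mu>)) * (U (gv (N - 1)) \<bullet> U (gv (N - 1)))
     + (\<Sum>i<N. lamS i / 2 * (- (U (gv i) \<bullet> U (wv \<mu> L \<alpha> i)) - U (wv \<mu> L \<alpha> i) \<bullet> U (gv i)
                              + 1 / (L - \<mu>) * (U (gv i) \<bullet> U (gv i))))
     + (\<Sum>i<N - 1. lam i / 2 *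
         ( U (gv (i + 1)) \<bullet> (U (wv \<mu> L \<alpha> i) - U (wv \<mu> L \<alpha> (i + 1)))
         + (U (wv \<mu> L \<alpha> i) - U (wv \<mu> L \<alpha> (i + 1))) \<bullet> U (gv (i + 1))
         + 1 / (L - \<mu>) * ((U (gv i) - U (gv (i + 1))) \<bullet> (U (gv i) - U (gv (i + 1))))))"
    unfolding Smat_def U_def
    by (simp only: Bf_add Bf_diff Bf_uminus Bf_scale Bf_sum Bf_outer Uv_diff)
  finally have main: "0 \<le> \<tau> * (U wv0 \<bullet> U wv0) - U (wv \<mu> L \<alpha> N) \<bullet> U (wv \<mu> L \<alpha> N)
     + lamN / (2 * (L - \<mu>)) * (U (gv (N - 1)) \<bullet> U (gv (N - 1)))
     + (\<Sum>i<N. lamS i / 2 * (- (U (gv i) \<bullet> U (wv \<mu> L \<alpha> i)) - U (wv \<mu> L \<alpha> i) \<bullet> U (gv i)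
                              + 1 / (L - \<mu>) * (U (gv i) \<bullet> U (gv i))))
     + (\<Sum>i<N - 1. lam i / 2 *
         ( U (gv (i + 1)) \<bullet> (U (wv \<mu> L \<alpha> i) - U (wv \<mu> L \<alpha> (i + 1)))
         + (U (wv \<mu> L \<alpha> i) - U (wv \<mu> L \<alpha> (i + 1))) \<bullet> U (gv (i + 1))
         + 1 / (L - \<mu>) * ((U (gv i) - U (gv (i + 1))) \<bullet> (U (gv i) - U (gv (i + 1))))))" .
  have nW0: "U wv0 \<bullet> U wv0 = (norm (w 0 - ws))\<^sup>2" by (simp add: Uw0 power2_norm_eq_inner)
  have nWN: "U (wv \<mu> L \<alpha> N) \<bullet> U (wv \<mu> L \<alpha> N) = (norm (w N - ws))\<^sup>2" by (simp add: Uw power2_norm_eq_inner)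
  show ?thesis
  proof (cases "N = 0")
    case True
    have "U (gv (N - 1)) = 0" using True by (simp add: U_def gv_def Uv_ev)
    then show ?thesis using main nW0 nWN True by simp
  next
    case False
    define W where "W i = w i - ws" for i
    define G where "G i = gt (w i)" for i
    define F where "F i = ft (w i) - ft ws" for i
    have s1: "(\<Sum>i<N. lamS i / 2 * (- (U (gv i) \<bullet> U (wv \<mu> L \<alpha> i)) - U (wv \<mu> L \<alpha> i) \<bullet> U (gv i)
                              + 1 / (L - \<mu>) * (U (gv i) \<bullet> U (gv i))))
       = (\<Sum>i<N. lamS i * (- (G i \<bullet> W i) + 1 / (2 * K) * (G i \<bullet> G i)))"
    proof (rule sum.cong[OF refl])
      fix i assume "i \<in> {..<N}"
      then have "U (gv i) = G i" "U (wv \<mu> L \<alpha> i) = W i" by (auto simp: Ug Uw G_def W_def)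
      then show "lamS i / 2 * (- (U (gv i) \<bullet> U (wv \<mu> L \<alpha> i)) - U (wv \<mu> L \<alpha> i) \<bullet> U (gv i)
                              + 1 / (L - \<mu>) * (U (gv i) \<bullet> U (gv i)))
            = lamS i * (- (G i \<bullet> W i) + 1 / (2 * K) * (G i \<bullet> G i))"
        using K by (simp add: inner_commute[of "W i"] K_def field_simps)
    qed
    have s2: "(\<Sum>i<N - 1. lam i / 2 *
         ( U (gv (i + 1)) \<bullet> (U (wv \<mu> L \<alpha> i) - U (wv \<mu> L \<alpha> (i + 1)))
         + (U (wv \<mu> L \<alpha> i) - U (wv \<mu> L \<alpha> (i + 1))) \<bullet> U (gv (i + 1))
         + 1 / (L - \<mu>) * ((U (gv i) - U (gv (i + 1))) \<bullet> (U (gv i) - U (gv (i + 1))))))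
       = (\<Sum>i<N - 1. lam i * (G (i + 1) \<bullet> (W i - W (i + 1))
            + 1 / (2 * K) * ((G i - G (i + 1)) \<bullet> (G i - G (i + 1)))))"
    proof (rule sum.cong[OF refl])
      fix i assume "i \<in> {..<N - 1}"
      then have "U (gv i) = G i" "U (wv \<mu> L \<alpha> i) = W i" "U (gv (i + 1)) = G (i + 1)"
         "U (wv \<mu> L \<alpha> (i + 1)) = W (i + 1)" by (auto simp: Ug Uw G_def W_def)
      then show "lam i / 2 *
         ( U (gv (i + 1)) \<bullet> (U (wv \<mu> L \<alpha> i) - U (wv \<mu> L \<alpha> (i + 1)))
         + (U (wv \<mu> L \<alpha> i) - U (wv \<mu> L \<alpha> (i + 1))) \<bullet> U (gv (i + 1))
         + 1 / (L - \<mu>) * ((U (gv i) - U (gv (i + 1))) \<bullet> (U (gv i) - U (gv (i + 1)))))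
         = lam i * (G (i + 1) \<bullet> (W i - W (i + 1))
            + 1 / (2 * K) * ((G i - G (i + 1)) \<bullet> (G i - G (i + 1))))"
        using K by (simp add: inner_commute[of "W i - W (Suc i)"] K_def field_simps)
    qed
    have s3: "lamN / (2 * (L - \<mu>)) * (U (gv (N - 1)) \<bullet> U (gv (N - 1)))
        = lamN * (1 / (2 * K) * (G (N - 1) \<bullet> G (N - 1)))"
      using False by (simp add: Ug G_def K_def)
    have nG: "\<And>v. (norm v)\<^sup>2 = v \<bullet> v" by (simp add: power2_norm_eq_inner)
    have A: "- (G i \<bullet> W i) + 1 / (2 * K) * (G i \<bullet> G i) \<le> - F i" for i
      using I[where x=ws and y="w i"] by (simp add: gtws nG G_def W_def F_def inner_diff_right)
    have B: "G (i + 1) \<bullet> (W i - W (i + 1)) + 1 / (2 * K) * ((G i - G (i + 1)) \<bullet> (G i - G (i + 1)))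
        \<le> - (F (i + 1) - F i)" for i
      using I[where x="w i" and y="w (i + 1)"] by (simp add: nG G_def W_def F_def)
    have C: "1 / (2 * K) * (G (N - 1) \<bullet> G (N - 1)) \<le> F (N - 1)"
      using I[where x="w (N - 1)" and y=ws] by (simp add: gtws nG G_def F_def)
    have Vf: "(\<Sum>j<N. fv k j * F j) = F k" if "k < N" for k
    proof -
      have "(\<Sum>j<N. fv k j * F j) = (\<Sum>j<N. if k = j then F j else 0)"
        unfolding fv_def ev_def by (rule sum.cong) auto
      then show ?thesis using that by simp
    qed
    have z: "(\<Sum>j<N. ((\<Sum>i<N - 1. lam i * (fv (i + 1) j - fv i j)) + (\<Sum>i<N. lamS i * fv i j)
              - lamN * fv (N - 1) j) * F j) = 0"
      by (rule sum.neutral) (use lin in auto)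
    have T1: "(\<Sum>j<N. (\<Sum>i<N - 1. lam i * (fv (i + 1) j - fv i j)) * F j) = (\<Sum>i<N - 1. lam i * (F (i + 1) - F i))"
    proof -
      have "(\<Sum>j<N. (\<Sum>i<N - 1. lam i * (fv (i + 1) j - fv i j)) * F j)
          = (\<Sum>i<N - 1. \<Sum>j<N. lam i * (fv (i + 1) j - fv i j) * F j)"
        by (subst sum.swap) (simp add: sum_distrib_right)
      also have "\<dots> = (\<Sum>i<N - 1. lam i * (F (i + 1) - F i))"
      proof (rule sum.cong[OF refl])
        fix i assume i: "i \<in> {..<N - 1}"
        have "(\<Sum>j<N. lam i * (fv (i + 1) j - fv i j) * F j)
            = lam i * ((\<Sum>j<N. fv (i + 1) j * F j) - (\<Sum>j<N. fv i j * F j))"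
          by (simp add: sum_distrib_left sum_subtractf algebra_simps)
        also have "\<dots> = lam i * (F (i + 1) - F i)" using i by (simp add: Vf)
        finally show "(\<Sum>j<N. lam i * (fv (i + 1) j - fv i j) * F j) = lam i * (F (i + 1) - F i)" .
      qed
      finally show ?thesis .
    qed
    have T2: "(\<Sum>j<N. (\<Sum>i<N. lamS i * fv i j) * F j) = (\<Sum>i<N. lamS i * F i)"
    proof -
      have "(\<Sum>j<N. (\<Sum>i<N. lamS i * fv i j) * F j) = (\<Sum>i<N. \<Sum>j<N. lamS i * (fv i j * F j))"
        by (subst sum.swap) (simp add: sum_distrib_right mult.assoc)
      also have "\<dots> = (\<Sum>i<N. lamS i * F i)"
        by (rule sum.cong[OF refl]) (simp add: sum_distrib_left[symmetric] Vf)
      finally show ?thesis .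
    qed
    have T3: "(\<Sum>j<N. lamN * fv (N - 1) j * F j) = lamN * F (N - 1)"
      using False by (simp add: sum_distrib_left[symmetric] mult.assoc Vf)
    have LI: "(\<Sum>i<N - 1. lam i * (F (i + 1) - F i)) + (\<Sum>i<N. lamS i * F i) - lamN * F (N - 1) = 0"
    proof -
      have E: "\<And>a b c :: nat \<Rightarrow> real. (\<Sum>j<N. (a j + b j - c j) * F j)
          = (\<Sum>j<N. a j * F j) + (\<Sum>j<N. b j * F j) - (\<Sum>j<N. c j * F j)"
        by (simp add: algebra_simps sum.distrib sum_subtractf)
      show ?thesis using z by (simp only: E T1 T2 T3)
    qed
    have R1: "(\<Sum>i<N. lamS i * (- (G i \<bullet> W i) + 1 / (2 * K) * (G i \<bullet> G i))) \<le> (\<Sum>i<N. lamS i * (- F i))"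
      using lamS0 A by (intro sum_mono mult_left_mono) auto
    have R2: "(\<Sum>i<N - 1. lam i * (G (i + 1) \<bullet> (W i - W (i + 1))
            + 1 / (2 * K) * ((G i - G (i + 1)) \<bullet> (G i - G (i + 1)))))
         \<le> (\<Sum>i<N - 1. lam i * (- (F (i + 1) - F i)))"
      using lam0 B by (intro sum_mono mult_left_mono) auto
    have R3: "lamN * (1 / (2 * K) * (G (N - 1) \<bullet> G (N - 1))) \<le> lamN * F (N - 1)"
      using lamN0 C by (rule mult_left_mono[rotated])
    have "(\<Sum>i<N. lamS i * (- F i)) = - (\<Sum>i<N. lamS i * F i)" by (simp add: sum_negf)
    moreover have "(\<Sum>i<N - 1. lam i * (- (F (i + 1) - F i))) = - (\<Sum>i<N - 1. lam i * (F (i + 1) - F i))"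
      by (simp only: mult_minus_right sum_negf)
    moreover have "\<tau> * (U wv0 \<bullet> U wv0) = \<tau> * (norm (w 0 - ws))\<^sup>2" by (simp add: nW0)
    ultimately show ?thesis using main nW0 nWN s1 s2 s3 R1 R2 R3 LI by linarith
  qed
qed


theorem lemma5:
  fixes N :: nat and \<mu> L :: real and \<alpha> :: "nat \<Rightarrow> nat \<Rightarrow> real"
    and f :: "'a::euclidean_space \<Rightarrow> real" and g :: "'a \<Rightarrow> 'a"
    and w :: "nat \<Rightarrow> 'a" and ws :: 'a
  assumes "0 \<le> \<mu>" and "\<mu> < L"
    and "F_class \<mu> L f g"
    and "\<forall>v. f ws \<le> f v"
    and "\<forall>k\<in>{1..N}. w k - ws =
           (1 - \<mu> / L * (\<Sum>i<k. \<alpha> k i)) *\<^sub>R (w 0 - ws)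
           - (\<Sum>i<k. (\<alpha> k i / L) *\<^sub>R (g (w i) - \<mu> *\<^sub>R (w i - ws)))"
  shows "ereal ((norm (w N - ws))\<^sup>2) \<le> UB \<mu> L \<alpha> N * ereal ((norm (w 0 - ws))\<^sup>2)"
proof (cases "w 0 = ws")
  case True
  have g0: "g ws = 0" by (rule grad_zero) (use assms in auto)
  have "w k = ws" if "k \<le> N" for k
    using that
  proof (induction k rule: less_induct)
    case (less k)
    show ?case
    proof (cases "k = 0")
      case True
      then show ?thesis using \<open>w 0 = ws\<close> by simp
    next
      case False
      then have "k \<in> {1..N}" using less.prems by simp
      then have "w k - ws = (1 - \<mu> / L * (\<Sum>i<k. \<alpha> k i)) *\<^sub>R (w 0 - ws)
           - (\<Sum>i<k. (\<alpha> k i / L) *\<^sub>R (g (w i) - \<mu> *\<^sub>R (w i - ws)))" using assms(5) by blast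
      also have "(\<Sum>i<k. (\<alpha> k i / L) *\<^sub>R (g (w i) - \<mu> *\<^sub>R (w i - ws))) = 0"
        by (rule sum.neutral) (use less.IH less.prems g0 in auto)
      finally show ?thesis using \<open>w 0 = ws\<close> by simp
    qed
  qed
  then show ?thesis using True by (simp add: zero_ereal_def[symmetric])
next
  case False
  define c where "c = (norm (w 0 - ws))\<^sup>2"
  define n where "n = (norm (w N - ws))\<^sup>2"
  have c: "c > 0" using False by (simp add: c_def)
  have "ereal (n / c) \<le> UB \<mu> L \<alpha> N"
    unfolding UB_def
  proof (rule Inf_greatest)
    fix x assume "x \<in> {ereal \<tau> | \<tau> lam lamS lamN. UB_feasible \<mu> L \<alpha> N \<tau> lam lamS lamN}"
    then obtain \<tau> lam lamS lamN where x: "x = ereal \<tau>" and fe: "UB_feasible \<mu> L \<alpha> N \<tau> lam lamS lamN"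
      by blast
    have "n \<le> \<tau> * c" unfolding n_def c_def by (rule bound[OF assms fe])
    then have "n / c \<le> \<tau>" using c by (simp add: divide_le_eq)
    then show "ereal (n / c) \<le> x" by (simp add: x)
  qed
  then have "ereal (n / c) * ereal c \<le> UB \<mu> L \<alpha> N * ereal c"
    by (rule ereal_mult_right_mono) (use c in simp)
  moreover have "ereal (n / c) * ereal c = ereal n" using c by simp
  ultimately show ?thesis by (simp add: n_def c_def)
qed

end
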